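(* Suppose $w$ satisfies (A1) and that (A2s) holds for every $\delta\in(0,1/2)$. Then there is a constant $C>0$ independent of $\delta$ such that for every $\delta\in(0,1/2)$ and every $x\in\Omega$, $a_\delta(x)-\int_0^1\widetilde w_\delta(x,y)\,dy\ \ge\ C\,\delta\, b_\delta(x).$
   Context: Throughout, $\Omega=(0,1)$, $\delta\in(0,1/2)$, $|\cdot|$ applied to a set denotes Lebesgue measure, and $\chi_A$ denotes the indicator function of a set $A$. A function $w:[0,\infty)\to[0,\infty)$ satisfies (A1) if $w$ is continuous and nonincreasing on $[0,1)$, positive on $(0,1)$, $w(r)=0$ for $r\ge 1$, and $\int_{\mathbb R} w(|z|)|z|^2\,dz=2$. Set $w_\delta(x,y)=\delta^{-3}w(|x-y|/\delta)$, $a_\delta(x)=\int_0^1 w_\delta(x,y)\,dy$, and $b_\delta(x)=\frac{2}{(x+\delta)^2}\int_{x-\delta}^{0}(x-y)w_\delta(x,y)\,dy$ for $x\in(0,\delta)$, $b_\delta(x)=\frac{2}{(1-x+\delta)^2}\int_{1}^{x+\delta}(y-x)w_\delta(x,y)\,dy$ for $x\in(1-\delta,1)$, and $b_\delta(x)=0$ otherwise. Define $\widetilde w_\delta(x,y)=|w_\delta(x,y)-b_\delta(x)\chi_{(0,\delta)}(|y-x|)|$. Condition (A2s) (for a given $\delta$): for every $x\in\Omega$, $|\{y\in\Omega: w_\delta(x,y)-b_\delta(x)\chi_{[0,\delta]}(|y-x|)\ge 0\}|\ \ge\ |\{y\in\Omega: w_\delta(x,y)-b_\delta(x)\chi_{[0,\delta]}(|y-x|)\le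 0\}|$. *)

theory Defs
  imports "HOL-Analysis.Analysis"
begin

text \<open>Kernel w : [0,inf) -> [0,inf), represented as a real function; only
  nonnegative arguments are ever used.\<close>

definition A1 :: "(real \<Rightarrow> real) \<Rightarrow> bool" where
  "A1 w \<longleftrightarrow>
     (\<forall>r\<ge>0. w r \<ge> 0) \<and>
     continuous_on {0..<1} w \<and>
     (\<forall>r s. 0 \<le> r \<and> r \<le> s \<and> s < 1 \<longrightarrow> w s \<le> w r) \<and>
     (\<forall>r\<in>{0<..<1}. w r > 0) \<and>
     (\<forall>r\<ge>1. w r = 0) \<and>
     (LINT z|lborel. w \<bar>z\<bar> * \<bar>z\<bar>^2) = 2"

definition w_delta :: "(real \<Rightarrow> real) \<Rightarrow> real \<Rightarrow> real \<Rightarrow> real \<Rightarrow> real" where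
  "w_delta w \<delta> x y = \<delta> powi (-3) * w (\<bar>x - y\<bar> / \<delta>)"

definition a_delta :: "(real \<Rightarrow> real) \<Rightarrow> real \<Rightarrow> real \<Rightarrow> real" where
  "a_delta w \<delta> x = (LINT y:{0<..<1}|lborel. w_delta w \<delta> x y)"

definition b_delta :: "(real \<Rightarrow> real) \<Rightarrow> real \<Rightarrow> real \<Rightarrow> real" where
  "b_delta w \<delta> x =
     (if x \<in> {0<..<\<delta>} then
        2 / (x + \<delta>)^2 * (LINT y:{x - \<delta>..0}|lborel. (x - y) * w_delta w \<delta> x y)
      else if x \<in> {1 - \<delta><..<1} then
        2 / (1 - x + \<delta>)^2 * (LINT y:{1..x + \<delta>}|lborel. (y - x) * w_delta w \<delta> x y)
      else 0)"

definition wt_delta :: "(real \<Rightarrow> real) \<Rightarrow> real \<Rightarrow> real \<Rightarrow> real \<Rightarrow> real" where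
  "wt_delta w \<delta> x y =
     \<bar>w_delta w \<delta> x y - b_delta w \<delta> x * indicator {0<..<\<delta>} \<bar>y - x\<bar>\<bar>"

definition A2s :: "(real \<Rightarrow> real) \<Rightarrow> real \<Rightarrow> bool" where
  "A2s w \<delta> \<longleftrightarrow>
     (\<forall>x\<in>{0<..<1::real}.
        measure lborel {y\<in>{0<..<1}. w_delta w \<delta> x y - b_delta w \<delta> x * indicator {0..\<delta>} \<bar>y - x\<bar> \<ge> 0}
        \<ge> measure lborel {y\<in>{0<..<1}. w_delta w \<delta> x y - b_delta w \<delta> x * indicator {0..\<delta>} \<bar>y - x\<bar> \<le> 0})"

end

theory Submission
  imports Defs
begin

lemma A1_nonneg: "A1 w \<Longrightarrow> 0 \<le> r \<Longrightarrow> 0 \<le> w r"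
  unfolding A1_def by auto

lemma A1_zero: "A1 w \<Longrightarrow> 1 \<le> r \<Longrightarrow> w r = 0"
  unfolding A1_def by auto

lemma A1_pos: "A1 w \<Longrightarrow> 0 < r \<Longrightarrow> r < 1 \<Longrightarrow> 0 < w r"
  unfolding A1_def by auto

lemma A1_mono: assumes "A1 w" "0 \<le> r" "r \<le> s" shows "w s \<le> w r"
proof (cases "s < 1")
  case True thus ?thesis using assms unfolding A1_def by auto
next
  case False
  hence "w s = 0" using A1_zero[OF assms(1)] by auto
  thus ?thesis using A1_nonneg[OF assms(1,2)] by simp
qed

lemma A1_meas:
  assumes "A1 w" "0 < \<delta>"
  shows "(\<lambda>y. w_delta w \<delta> x y) \<in> borel_measurable borel"
proof -
  define g where "g r = - w (max r 0)" for r
  have "mono g" unfolding g_def mono_def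
    using A1_mono[OF assms(1)] by (simp add: max_def)
  hence gm: "g \<in> borel_measurable borel" by (rule borel_measurable_mono)
  have eq: "(\<lambda>y. w_delta w \<delta> x y) = (\<lambda>y. - (\<delta> powi (-3)) * g (\<bar>x - y\<bar> / \<delta>))"
  proof -
    have "\<And>y. max (\<bar>x - y\<bar> / \<delta>) 0 = \<bar>x - y\<bar> / \<delta>" using assms(2) by simp
    thus ?thesis by (simp add: w_delta_def g_def fun_eq_iff)
  qed
  show ?thesis unfolding eq using gm by measurable
qed

lemma mIoo: "(l::real) \<le> u \<Longrightarrow> measure lborel {l<..<u} = u - l"
  by (simp add: measure_def)
lemma mIoc: "(l::real) \<le> u \<Longrightarrow> measure lborel {l<..u} = u - l"
  by (simp add: measure_def)
lemma mIco: "(l::real) \<le> u \<Longrightarrow> measure lborel {l..<u} = u - l"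
  by (simp add: measure_def)
lemma mIcc: "(l::real) \<le> u \<Longrightarrow> measure lborel {l..u} = u - l"
  by (simp add: measure_def)

lemma powi3_pos: "0 < (\<delta>::real) \<Longrightarrow> 0 < \<delta> powi (-3)"
  by (rule zero_less_power_int)

lemma W_nonneg: assumes "A1 w" "0 < \<delta>" shows "0 \<le> w_delta w \<delta> x y"
proof -
  have "0 \<le> w (\<bar>x - y\<bar> / \<delta>)" by (rule A1_nonneg[OF assms(1)]) (use assms(2) in simp)
  thus ?thesis unfolding w_delta_def using powi3_pos[OF assms(2)] by simp
qed

lemma W_le: assumes "A1 w" "0 < \<delta>" "0 \<le> r" "r * \<delta> \<le> \<bar>x - y\<bar>"
  shows "w_delta w \<delta> x y \<le> \<delta> powi (-3) * w r"
proof -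
  have "r \<le> \<bar>x - y\<bar> / \<delta>" using assms by (simp add: field_simps)
  hence "w (\<bar>x - y\<bar> / \<delta>) \<le> w r" using A1_mono[OF assms(1,3)] by blast
  thus ?thesis unfolding w_delta_def using powi3_pos[OF assms(2)] by (intro mult_left_mono) auto
qed

lemma W_ge: assumes "A1 w" "0 < \<delta>" "\<bar>x - y\<bar> \<le> r * \<delta>"
  shows "\<delta> powi (-3) * w r \<le> w_delta w \<delta> x y"
proof -
  have "\<bar>x - y\<bar> / \<delta> \<le> r" using assms by (simp add: field_simps)
  hence "w r \<le> w (\<bar>x - y\<bar> / \<delta>)" using A1_mono[OF assms(1)] assms(2) by simp
  thus ?thesis unfolding w_delta_def using powi3_pos[OF assms(2)] by (intro mult_left_mono) auto
qed

lemma W_zero: assumes "A1 w" "0 < \<delta>" "\<delta> \<le> \<bar>x - y\<bar>"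
  shows "w_delta w \<delta> x y = 0"
proof -
  have "1 \<le> \<bar>x - y\<bar> / \<delta>" using assms by (simp add: field_simps)
  thus ?thesis unfolding w_delta_def using A1_zero[OF assms(1)] by simp
qed

lemma W_le0: "A1 w \<Longrightarrow> 0 < \<delta> \<Longrightarrow> w_delta w \<delta> x y \<le> \<delta> powi (-3) * w 0"
  using W_le[of w \<delta> 0 x y] by simp

lemma b_bounds:
  assumes A: "A1 w" and d: "0 < \<delta>" and x: "0 < x" "x < 1"
  shows "0 \<le> b_delta w \<delta> x \<and> b_delta w \<delta> x \<le> 2 * w 0 * \<delta> powi (-3)"
proof -
  define K where "K = \<delta> * (\<delta> powi (-3) * w 0)"
  have w0: "0 \<le> w 0" using A1_nonneg[OF A] by simp
  have K0: "0 \<le> K" unfolding K_def using d w0 powi3_pos[OF d] by simp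
  have Wm: "(\<lambda>y. w_delta w \<delta> x y) \<in> borel_measurable borel" by (rule A1_meas[OF A d])
  show ?thesis
  proof (cases "x \<in> {0<..<\<delta>}")
    case True
    define S where "S = {x - \<delta>..0}"
    have intS: "integrable lborel (indicator S :: real \<Rightarrow> real)"
      by (rule integrable_real_indicator) (auto simp: S_def emeasure_lborel_Icc_eq)
    define I where "I = (LINT y:S|lborel. (x - y) * w_delta w \<delta> x y)"
    have pt: "0 \<le> indicator S y * ((x - y) * w_delta w \<delta> x y) \<and>
              indicator S y * ((x - y) * w_delta w \<delta> x y) \<le> K * indicator S y" for y
    proof (cases "y \<in> S")
      case True
      hence "0 \<le> x - y" "x - y \<le> \<delta>" using x unfolding S_def by auto
      moreover have "0 \<le> w_delta w \<delta> x y" "w_delta w \<delta> x y \<le> \<delta> powi (-3) * w 0"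
        using W_nonneg[OF A d] W_le0[OF A d] by auto
      ultimately show ?thesis using True unfolding K_def by (simp add: mult_mono)
    qed simp
    have I0: "0 \<le> I" unfolding I_def set_lebesgue_integral_def
      using pt by (intro integral_nonneg_AE) simp
    have "I \<le> integral\<^sup>L lborel (\<lambda>y. K * indicator S y)" unfolding I_def set_lebesgue_integral_def
      using pt K0 intS by (intro integral_mono_AE') auto
    also have "\<dots> = K * (\<delta> - x)" using True by (simp add: S_def mIcc)
    also have "\<dots> \<le> K * \<delta>" using K0 x by (simp add: mult_left_mono)
    finally have I1: "I \<le> K * \<delta>" .
    have bI: "b_delta w \<delta> x = 2 / (x + \<delta>)^2 * I" using True unfolding b_delta_def I_def S_def by simp
    have "2 / (x + \<delta>)^2 * I \<le> 2 / \<delta>^2 * (K * \<delta>)"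
    proof (rule mult_mono)
      show "2 / (x + \<delta>)^2 \<le> 2 / \<delta>^2" using d x by (intro divide_left_mono power_mono) auto
    qed (use I1 I0 d in auto)
    also have "\<dots> = 2 * w 0 * \<delta> powi (-3)" using d unfolding K_def by (simp add: power2_eq_square)
    finally show ?thesis using bI I0 by simp
  next
    case F1: False
    show ?thesis
    proof (cases "x \<in> {1 - \<delta><..<1}")
      case True
      define S where "S = {1..x + \<delta>}"
      have intS: "integrable lborel (indicator S :: real \<Rightarrow> real)"
        by (rule integrable_real_indicator) (auto simp: S_def emeasure_lborel_Icc_eq)
      define I where "I = (LINT y:S|lborel. (y - x) * w_delta w \<delta> x y)"
      have pt: "0 \<le> indicator S y * ((y - x) * w_delta w \<delta> x y) \<and>
                indicator S y * ((y - x) * w_delta w \<delta> x y) \<le> K * indicator S y" for y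
      proof (cases "y \<in> S")
        case True
        hence "0 \<le> y - x" "y - x \<le> \<delta>" using x unfolding S_def by auto
        moreover have "0 \<le> w_delta w \<delta> x y" "w_delta w \<delta> x y \<le> \<delta> powi (-3) * w 0"
          using W_nonneg[OF A d] W_le0[OF A d] by auto
        ultimately show ?thesis using True unfolding K_def by (simp add: mult_mono)
      qed simp
      have I0: "0 \<le> I" unfolding I_def set_lebesgue_integral_def
        using pt by (intro integral_nonneg_AE) simp
      have "I \<le> integral\<^sup>L lborel (\<lambda>y. K * indicator S y)" unfolding I_def set_lebesgue_integral_def
        using pt K0 intS by (intro integral_mono_AE') auto
      also have "\<dots> = K * (x + \<delta> - 1)" using True by (simp add: S_def mIcc)
      also have "\<dots> \<le> K * \<delta>" using K0 x by (simp add: mult_left_mono)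
      finally have I1: "I \<le> K * \<delta>" .
      have bI: "b_delta w \<delta> x = 2 / (1 - x + \<delta>)^2 * I" using True F1 x unfolding b_delta_def I_def S_def by simp
      have "2 / (1 - x + \<delta>)^2 * I \<le> 2 / \<delta>^2 * (K * \<delta>)"
      proof (rule mult_mono)
        show "2 / (1 - x + \<delta>)^2 \<le> 2 / \<delta>^2" using d x by (intro divide_left_mono power_mono) auto
      qed (use I1 I0 d in auto)
      also have "\<dots> = 2 * w 0 * \<delta> powi (-3)" using d unfolding K_def by (simp add: power2_eq_square)
      finally show ?thesis using bI I0 by simp
    next
      case False
      hence "b_delta w \<delta> x = 0" using F1 x unfolding b_delta_def by simp
      thus ?thesis using w0 d by simp
    qed
  qed
qed

theorem mainTheorem6:
  fixes w :: "real \<Rightarrow> real"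
  assumes "A1 w"
    and "\<forall>\<delta>\<in>{0<..<1/2}. A2s w \<delta>"
  shows "\<exists>C>0. \<forall>\<delta>\<in>{0<..<1/2::real}. \<forall>x\<in>{0<..<1::real}.
           a_delta w \<delta> x - (LINT y:{0<..<1}|lborel. wt_delta w \<delta> x y) \<ge> C * \<delta> * b_delta w \<delta> x"
proof -
  have A: "A1 w" by (rule assms(1))
  have w0pos: "0 < w 0"
    using A1_pos[OF A, of "1/2"] A1_mono[OF A, of 0 "1/2"] by simp
  have c15: "0 < w (15/16)" using A1_pos[OF A, of "15/16"] by simp
  define C where "C = min (1/2) (w (15/16) / (16 * w 0))"
  have Cpos: "0 < C" unfolding C_def using w0pos c15 by simp
  show ?thesis
  proof (intro exI[of _ C] conjI ballI)
    show "0 < C" by (rule Cpos)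
    fix \<delta> x :: real
    assume dI: "\<delta> \<in> {0<..<1/2}" and xI: "x \<in> {0<..<1}"
    have d: "0 < \<delta>" "\<delta> < 1/2" using dI by auto
    have x: "0 < x" "x < 1" using xI by auto
    have d3: "0 < \<delta> powi (-3)" by (rule powi3_pos[OF d(1)])
    define B where "B = b_delta w \<delta> x"
    have B0: "0 \<le> B" and Bup: "B \<le> 2 * w 0 * \<delta> powi (-3)"
      using b_bounds[OF A d(1) x] unfolding B_def by auto
    define W where "W y = w_delta w \<delta> x y" for y
    define Om where "Om = {0<..<1::real}"
    define chi where "chi y = (indicator {0<..<\<delta>} \<bar>y - x\<bar> :: real)" for y
    define h where "h y = indicator Om y * (W y - \<bar>W y - B * chi y\<bar>)" for y
    have Wm[measurable]: "W \<in> borel_measurable borel"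
      unfolding W_def using A1_meas[OF A d(1)] by simp
    have Wnn: "0 \<le> W y" for y unfolding W_def by (rule W_nonneg[OF A d(1)])
    have Wle: "W y \<le> \<delta> powi (-3) * w 0" for y unfolding W_def by (rule W_le0[OF A d(1)])
    have Wz: "\<delta> \<le> \<bar>y - x\<bar> \<Longrightarrow> W y = 0" for y
      unfolding W_def by (rule W_zero[OF A d(1)]) (simp add: abs_minus_commute)
    have Wge: "\<bar>y - x\<bar> \<le> r * \<delta> \<Longrightarrow> \<delta> powi (-3) * w r \<le> W y" for y r
      unfolding W_def by (rule W_ge[OF A d(1)]) (simp add: abs_minus_commute)
    have Wle2: "0 \<le> r \<Longrightarrow> r * \<delta> \<le> \<bar>y - x\<bar> \<Longrightarrow> W y \<le> \<delta> powi (-3) * w r" for y r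
      unfolding W_def by (rule W_le[OF A d(1)]) (simp_all add: abs_minus_commute)
    have chim[measurable]: "chi \<in> borel_measurable borel" unfolding chi_def by measurable
    have chi01: "chi y = 0 \<or> chi y = 1" for y unfolding chi_def by (simp add: indicator_def)
    have hm: "h \<in> borel_measurable lborel" unfolding h_def Om_def by measurable
    have IOm: "integrable lborel (indicator Om :: real \<Rightarrow> real)"
      unfolding Om_def by (rule integrable_real_indicator) auto
    define M where "M = \<delta> powi (-3) * w 0"
    have M0: "0 \<le> M" unfolding M_def using d3 w0pos by simp
    have WleM: "W y \<le> M" for y using Wle unfolding M_def by simp
    have hint: "integrable lborel h"
    proof (rule Bochner_Integration.integrable_bound[where f="\<lambda>y. (2 * M + B) * indicator Om y"])
      show "integrable lborel (\<lambda>y. (2 * M + B) * indicator Om y)" using IOm by simp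
      show "h \<in> borel_measurable lborel" by (rule hm)
      show "AE y in lborel. norm (h y) \<le> norm ((2 * M + B) * indicator Om y)"
      proof (intro AE_I2)
        fix y
        have "\<bar>W y - \<bar>W y - B * chi y\<bar>\<bar> \<le> 2 * M + B"
          using Wnn[of y] WleM[of y] chi01[of y] B0 M0 by (auto simp: abs_if)
        thus "norm (h y) \<le> norm ((2 * M + B) * indicator Om y)"
          unfolding h_def using M0 B0 by (auto simp: indicator_def)
      qed
    qed
    have int1: "integrable lborel (\<lambda>y. indicator Om y *\<^sub>R w_delta w \<delta> x y)"
    proof (rule Bochner_Integration.integrable_bound[where f="\<lambda>y. M * indicator Om y"])
      show "integrable lborel (\<lambda>y. M * indicator Om y)" using IOm by simp
      show "(\<lambda>y. indicator Om y *\<^sub>R w_delta w \<delta> x y) \<in> borel_measurable lborel"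
        using Wm unfolding W_def Om_def by measurable
      show "AE y in lborel. norm (indicator Om y *\<^sub>R w_delta w \<delta> x y) \<le> norm (M * indicator Om y)"
        using Wnn WleM M0 unfolding W_def by (intro AE_I2) (auto simp: indicator_def)
    qed
    have wt_eq: "wt_delta w \<delta> x y = \<bar>W y - B * chi y\<bar>" for y
      by (simp add: wt_delta_def W_def B_def chi_def)
    have int2: "integrable lborel (\<lambda>y. indicator Om y *\<^sub>R wt_delta w \<delta> x y)"
    proof (rule Bochner_Integration.integrable_bound[where f="\<lambda>y. (M + B) * indicator Om y"])
      show "integrable lborel (\<lambda>y. (M + B) * indicator Om y)" using IOm by simp
      show "(\<lambda>y. indicator Om y *\<^sub>R wt_delta w \<delta> x y) \<in> borel_measurable lborel"
        unfolding wt_eq Om_def by measurable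
      show "AE y in lborel. norm (indicator Om y *\<^sub>R wt_delta w \<delta> x y) \<le> norm ((M + B) * indicator Om y)"
      proof (intro AE_I2)
        fix y
        have "\<bar>W y - B * chi y\<bar> \<le> M + B"
          using Wnn[of y] WleM[of y] chi01[of y] B0 M0 by (auto simp: abs_if)
        thus "norm (indicator Om y *\<^sub>R wt_delta w \<delta> x y) \<le> norm ((M + B) * indicator Om y)"
          unfolding wt_eq using M0 B0 by (auto simp: indicator_def)
      qed
    qed
    have LHS: "a_delta w \<delta> x - (LINT y:{0<..<1}|lborel. wt_delta w \<delta> x y) = integral\<^sup>L lborel h"
    proof -
      have "a_delta w \<delta> x - (LINT y:{0<..<1}|lborel. wt_delta w \<delta> x y) =
          integral\<^sup>L lborel (\<lambda>y. indicator Om y *\<^sub>R w_delta w \<delta> x y - indicator Om y *\<^sub>R wt_delta w \<delta> x y)"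
        unfolding a_delta_def set_lebesgue_integral_def Om_def[symmetric]
        by (rule Bochner_Integration.integral_diff[OF int1 int2, symmetric])
      also have "\<dots> = integral\<^sup>L lborel h"
        by (intro arg_cong[where f="integral\<^sup>L lborel"] ext) (simp add: h_def wt_eq W_def right_diff_distrib)
      finally show ?thesis .
    qed
    show "C * \<delta> * b_delta w \<delta> x \<le> a_delta w \<delta> x - (LINT y:{0<..<1}|lborel. wt_delta w \<delta> x y)"
      unfolding LHS B_def[symmetric]
    proof -
    have hO: "y \<notin> Om \<Longrightarrow> h y = 0" for y unfolding h_def by simp
    have hF: "\<delta> \<le> \<bar>y - x\<bar> \<Longrightarrow> h y = 0" for y
    proof -
      assume a: "\<delta> \<le> \<bar>y - x\<bar>"
      hence "chi y = 0" unfolding chi_def by (simp add: indicator_def)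
      thus ?thesis unfolding h_def using Wz[OF a] by simp
    qed
    have hN: "y \<in> Om \<Longrightarrow> 0 < \<bar>y - x\<bar> \<Longrightarrow> \<bar>y - x\<bar> < \<delta> \<Longrightarrow> h y = W y - \<bar>W y - B\<bar>" for y
      unfolding h_def chi_def by (simp add: indicator_def)
    have hx: "h x = 0" unfolding h_def chi_def using Wnn[of x] by (simp add: indicator_def)
    have hnn_or: "0 \<le> h y \<or> (y \<in> Om \<and> 0 < \<bar>y - x\<bar> \<and> \<bar>y - x\<bar> < \<delta> \<and> h y = 2 * W y - B \<and> W y < B)" for y
    proof (cases "y \<in> Om \<and> 0 < \<bar>y - x\<bar> \<and> \<bar>y - x\<bar> < \<delta>")
      case True
      hence e: "h y = W y - \<bar>W y - B\<bar>" using hN by blast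
      show ?thesis
      proof (cases "B \<le> W y")
        case True thus ?thesis using e B0 by simp
      next
        case False thus ?thesis using e \<open>y \<in> Om \<and> 0 < \<bar>y - x\<bar> \<and> \<bar>y - x\<bar> < \<delta>\<close> by simp
      qed
    next
      case False
      hence "h y = 0"
      proof (cases "y \<in> Om")
        case True
        with False have "\<bar>y - x\<bar> = 0 \<or> \<delta> \<le> \<bar>y - x\<bar>" by auto
        thus ?thesis using hF hx by auto
      qed (use hO in auto)
      thus ?thesis by simp
    qed
    have hlow: "- B \<le> h y" for y using hnn_or[of y] Wnn[of y] B0 by auto
    show "C * \<delta> * B \<le> integral\<^sup>L lborel h"
    proof (cases "B \<le> \<delta> powi (-3) * w (7/8)")
      case True
      obtain I where I: "I \<subseteq> Om" "integrable lborel (indicator I :: real \<Rightarrow> real)"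
        "measure lborel I = 7/8 * \<delta>" "\<And>y. y \<in> I \<Longrightarrow> 0 < \<bar>y - x\<bar> \<and> \<bar>y - x\<bar> \<le> 7/8 * \<delta>"
      proof (cases "x \<le> 1/2")
        case True
        show ?thesis
        proof (rule that[of "{x<..x + 7/8*\<delta>}"])
          show "integrable lborel (indicator {x<..x + 7/8*\<delta>} :: real \<Rightarrow> real)"
            using d by (intro integrable_real_indicator) auto
        qed (use True d x in \<open>auto simp: Om_def mIoc\<close>)
      next
        case False
        show ?thesis
        proof (rule that[of "{x - 7/8*\<delta>..<x}"])
          show "integrable lborel (indicator {x - 7/8*\<delta>..<x} :: real \<Rightarrow> real)"
            using d by (intro integrable_real_indicator) auto
        qed (use False d x in \<open>auto simp: Om_def mIco\<close>)
      qed
      define L1 where "L1 = {x - \<delta>..<x - 7/8*\<delta>}"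
      define L2 where "L2 = {x + 7/8*\<delta><..x + \<delta>}"
      have iL1: "integrable lborel (indicator L1 :: real \<Rightarrow> real)"
        unfolding L1_def using d by (intro integrable_real_indicator) auto
      have iL2: "integrable lborel (indicator L2 :: real \<Rightarrow> real)"
        unfolding L2_def using d by (intro integrable_real_indicator) auto
      have mL1: "measure lborel L1 = \<delta>/8" unfolding L1_def using d by (simp add: mIco)
      have mL2: "measure lborel L2 = \<delta>/8" unfolding L2_def using d by (simp add: mIoc)
      define F where "F y = B * indicator I y - B * indicator L1 y - B * indicator L2 y" for y
      have Fint: "integrable lborel F" unfolding F_def using I(2) iL1 iL2 by simp
      have FI: "integral\<^sup>L lborel F = B * (7/8*\<delta>) - B * (\<delta>/8) - B * (\<delta>/8)"
      proof -
        have "integral\<^sup>L lborel F = B * measure lborel I - B * measure lborel L1 - B * measure lborel L2"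
          unfolding F_def using I(2) iL1 iL2 by simp
        thus ?thesis by (simp only: I(3) mL1 mL2)
      qed
      have pt: "F y \<le> h y" for y
      proof (cases "y \<in> I")
        case yI: True
        have a: "0 < \<bar>y - x\<bar>" "\<bar>y - x\<bar> \<le> 7/8 * \<delta>" using I(4)[OF yI] by auto
        have "y \<notin> L1" "y \<notin> L2" using a unfolding L1_def L2_def by auto
        hence "F y = B" unfolding F_def using yI by simp
        moreover have "B \<le> W y" using Wge[OF a(2)] True by simp
        moreover have "h y = W y - \<bar>W y - B\<bar>" using hN[of y] a I(1) yI d by auto
        ultimately show ?thesis by simp
      next
        case yI: False
        have Fle: "F y \<le> 0" unfolding F_def using yI B0 by (simp add: indicator_def)
        show ?thesis
        proof (cases "0 \<le> h y")
          case True thus ?thesis using Fle by simp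
        next
          case False
          hence c: "y \<in> Om" "0 < \<bar>y - x\<bar>" "\<bar>y - x\<bar> < \<delta>" "h y = 2 * W y - B" "W y < B"
            using hnn_or[of y] by auto
          have "\<not> \<bar>y - x\<bar> \<le> 7/8 * \<delta>" using Wge[of y "7/8"] True c(5) by auto
          hence "y \<in> L1 \<or> y \<in> L2" using c(3) unfolding L1_def L2_def by (auto simp: abs_real_def split: if_splits)
          moreover have "\<not> (y \<in> L1 \<and> y \<in> L2)" unfolding L1_def L2_def using d by auto
          ultimately have "F y = - B" unfolding F_def using yI by (auto simp: indicator_def)
          thus ?thesis using c(4) Wnn[of y] by simp
        qed
      qed
      have "integral\<^sup>L lborel F \<le> integral\<^sup>L lborel h"
        by (rule integral_mono[OF Fint hint]) (rule pt)
      moreover have "C * \<delta> * B \<le> B * (7/8*\<delta>) - B * (\<delta>/8) - B * (\<delta>/8)"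
      proof -
        have "C * \<delta> * B \<le> 1/2 * \<delta> * B"
          unfolding C_def using d B0 by (intro mult_right_mono) auto
        thus ?thesis using mult_nonneg_nonneg[OF B0 less_imp_le[OF d(1)]] by (simp add: algebra_simps)
      qed
      ultimately show ?thesis using FI by simp
    next
      case False
      define c where "c = \<delta> powi (-3) * w (15/16)"
      have w78: "0 < w (7/8)" using A1_pos[OF A, of "7/8"] by simp
      have Bpos: "0 < B" using False d3 w78 by (smt (verit) mult_pos_pos)
      obtain J where J: "J \<subseteq> Om" "integrable lborel (indicator J :: real \<Rightarrow> real)"
        "measure lborel J = \<delta>/16" "\<And>y. y \<in> J \<Longrightarrow> 7/8 * \<delta> < \<bar>y - x\<bar> \<and> \<bar>y - x\<bar> < 15/16 * \<delta>"
      proof (cases "x \<le> 1/2")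
        case True
        show ?thesis
        proof (rule that[of "{x + 7/8*\<delta><..<x + 15/16*\<delta>}"])
          show "integrable lborel (indicator {x + 7/8*\<delta><..<x + 15/16*\<delta>} :: real \<Rightarrow> real)"
            using d by (intro integrable_real_indicator) auto
        qed (use True d x in \<open>auto simp: Om_def mIoo\<close>)
      next
        case False
        show ?thesis
        proof (rule that[of "{x - 15/16*\<delta><..<x - 7/8*\<delta>}"])
          show "integrable lborel (indicator {x - 15/16*\<delta><..<x - 7/8*\<delta>} :: real \<Rightarrow> real)"
            using d by (intro integrable_real_indicator) auto
        qed (use False d x in \<open>auto simp: Om_def mIoo\<close>)
      qed
      define p where "p y = (indicator {0..\<delta>} \<bar>y - x\<bar> :: real)" for y
      define S1 where "S1 = {y\<in>{0<..<1}. w_delta w \<delta> x y - b_delta w \<delta> x * indicator {0..\<delta>} \<bar>y - x\<bar> \<ge> 0}"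
      define S2 where "S2 = {y\<in>{0<..<1}. w_delta w \<delta> x y - b_delta w \<delta> x * indicator {0..\<delta>} \<bar>y - x\<bar> \<le> 0}"
      have mS: "measure lborel S2 \<le> measure lborel S1"
        using assms(2) dI xI unfolding A2s_def S1_def S2_def by blast
      have S1e: "S1 = Om \<inter> {y. 0 \<le> W y - B * p y}"
        unfolding S1_def Om_def W_def B_def p_def by auto
      have S2e: "S2 = Om \<inter> {y. W y - B * p y \<le> 0}"
        unfolding S2_def Om_def W_def B_def p_def by auto
      have pm[measurable]: "p \<in> borel_measurable borel" unfolding p_def by measurable
      have Oms[measurable]: "Om \<in> sets borel" unfolding Om_def by simp
      have S1s: "S1 \<in> sets lborel" unfolding S1e by measurable
      have S2s: "S2 \<in> sets lborel" unfolding S2e by measurable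
      have eOm: "emeasure lborel Om < \<infinity>" unfolding Om_def by simp
      have iS1: "integrable lborel (indicator S1 :: real \<Rightarrow> real)"
      proof (rule integrable_real_indicator[OF S1s])
        have "emeasure lborel S1 \<le> emeasure lborel Om" by (rule emeasure_mono) (auto simp: S1e)
        thus "emeasure lborel S1 < \<infinity>" using eOm by simp
      qed
      have iS2: "integrable lborel (indicator S2 :: real \<Rightarrow> real)"
      proof (rule integrable_real_indicator[OF S2s])
        have "emeasure lborel S2 \<le> emeasure lborel Om" by (rule emeasure_mono) (auto simp: S2e)
        thus "emeasure lborel S2 < \<infinity>" using eOm by simp
      qed
      define F where "F y = B * indicator S1 y - B * indicator S2 y + 2 * c * indicator J y" for y
      have Fint: "integrable lborel F" unfolding F_def using iS1 iS2 J(2) by simp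
      have FI: "integral\<^sup>L lborel F = B * measure lborel S1 - B * measure lborel S2 + 2 * c * (\<delta>/16)"
      proof -
        have "integral\<^sup>L lborel F = B * measure lborel S1 - B * measure lborel S2 + 2 * c * measure lborel J"
          unfolding F_def using iS1 iS2 J(2) by simp
        thus ?thesis by (simp only: J(3))
      qed
      have pt: "F y \<le> h y" if yx: "y \<noteq> x" for y
      proof (cases "y \<in> Om")
        case False
        hence "y \<notin> S1" "y \<notin> S2" "y \<notin> J" using J(1) unfolding S1e S2e by auto
        thus ?thesis using hO[OF False] unfolding F_def by simp
      next
        case yO: True
        have pos: "0 < \<bar>y - x\<bar>" using yx by simp
        consider "\<delta> < \<bar>y - x\<bar>" | "\<bar>y - x\<bar> = \<delta>" | "\<bar>y - x\<bar> < \<delta>" by linarith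
        then show ?thesis
        proof cases
          case 1
          hence "p y = 0" "W y = 0" using Wz[of y] unfolding p_def by (auto simp: indicator_def)
          hence "y \<in> S1" "y \<in> S2" unfolding S1e S2e using yO by auto
          moreover have "y \<notin> J" using J(4)[of y] 1 d by auto
          ultimately show ?thesis using hF[of y] 1 unfolding F_def by simp
        next
          case 2
          hence "p y = 1" "W y = 0" using Wz[of y] d unfolding p_def by (auto simp: indicator_def)
          hence "y \<notin> S1" "y \<in> S2" unfolding S1e S2e using yO Bpos by auto
          moreover have "y \<notin> J" using J(4)[of y] 2 d by auto
          ultimately show ?thesis using hF[of y] 2 Bpos unfolding F_def by simp
        next
          case 3
          hence p1: "p y = 1" unfolding p_def by (simp add: indicator_def)
          have he: "h y = W y - \<bar>W y - B\<bar>" using hN[OF yO pos 3] .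
          show ?thesis
          proof (cases "y \<in> J")
            case yJ: True
            have a: "7/8 * \<delta> < \<bar>y - x\<bar>" "\<bar>y - x\<bar> < 15/16 * \<delta>" using J(4)[OF yJ] by auto
            have "c \<le> W y" unfolding c_def using Wge[of y "15/16"] a by simp
            moreover have "W y < B" using Wle2[of "7/8" y] a False by simp
            ultimately show ?thesis unfolding F_def S1e S2e using yJ yO p1 he by simp
          next
            case yJ: False
            show ?thesis
            proof (cases "B \<le> W y")
              case True
              thus ?thesis unfolding F_def S1e S2e using yJ yO p1 he B0 by (simp add: indicator_def)
            next
              case False
              thus ?thesis unfolding F_def S1e S2e using yJ yO p1 he Wnn[of y] by (simp add: indicator_def)
            qed
          qed
        qed
      qed
      have "integral\<^sup>L lborel F \<le> integral\<^sup>L lborel h"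
      proof (rule integral_mono_AE[OF Fint hint])
        show "AE y in lborel. F y \<le> h y"
          by (rule AE_mp[OF AE_lborel_singleton[of x]]) (auto intro!: AE_I2 pt)
      qed
      moreover have "C * \<delta> * B \<le> B * measure lborel S1 - B * measure lborel S2 + 2 * c * (\<delta>/16)"
      proof -
        have "C * \<delta> * B \<le> (w (15/16) / (16 * w 0)) * \<delta> * B"
          unfolding C_def using d B0 by (intro mult_right_mono) auto
        also have "\<dots> \<le> (w (15/16) / (16 * w 0)) * \<delta> * (2 * w 0 * \<delta> powi (-3))"
          using Bup d c15 w0pos by (intro mult_left_mono) auto
        also have "\<dots> = 2 * c * (\<delta>/16)" unfolding c_def using w0pos by (simp add: field_simps)
        also have "\<dots> \<le> B * measure lborel S1 - B * measure lborel S2 + 2 * c * (\<delta>/16)"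
          using mS B0 mult_left_mono[OF mS B0] by simp
        finally show ?thesis .
      qed
      ultimately show ?thesis using FI by simp
    qed
  qed
qed

qed

end
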